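(* In the setting of the context, under condition (A1) the family $\{a_{v,\sigma}\}_{v\in\mathcal{V}_L^W}$ is connected: for any $v,v'\in\mathcal{V}_L^W$ there is a sequence $v=v_0,v_1,\dots,v_k=v'$ of white vertices such that for each $j$, $a_{v_{j-1},\sigma}$ and $a_{v_j,\sigma}$ are directly connected, meaning there is a vertex $u$ with $\{c^\dagger_{u,\sigma},a_{v_{j-1},\sigma}\}\ne0$ and $\{c^\dagger_{u,\sigma},a_{v_j,\sigma}\}\neq 0$.
   Context: Construction. Let $G_l=(V_l,E_l)$, $l=1,\dots,L$, be complete graphs with $|V_l|\ge 2$. In each $V_l$ one vertex $v_l^0$ is painted black, the others white. Set $\mathcal{G}_1=G_1$. For $l=2,\dots,L$: choose an integer $z_l$ with $0<z_l\le |V_l|-1$, choose $z_l$ white vertices of $V_l$ and identify each with a vertex (black or white; distinct with distinct) of $\mathcal{V}_{l-1}$; $\mathcal{V}_l=\mathcal{V}_{l-1}\cup V_l$ with these identifications and $\mathcal{E}_l=\mathcal{E}_{l-1}\cup E_l$. A white vertex identified with a black one becomes black; two identified white vertices stay white; $v_l^0$ is never identified with an earlier vertex. $\mathcal{V}_l^W$ denotes the white vertices of $\mathcal{G}_l$. Directed edges: $\vec{\mathcal{E}}_L=\bigcup_l\{(v,v_l^0):v\in V_l\setminus\{v_l^0\}\}$; directed paths (including the trivial path $(v)$), reachable set $R(v)$, number $N(v\to u)$ of directed paths from $v$ to $u$, and $|(v\to u)_j|$ the number of vertices on the $j$-th path. Condition (A1): for every $l\in\{2,\dots,L\}$ with $z_l\neq|V_l|-1$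 there exists $v\in\mathcal{V}_{l-1}^W$ with $N(v\to v_l^0)$ odd. Fermions $c_{v,\sigma}$ with canonical anticommutation relations; for white $v$, $a_{v,\sigma}=\sum_{u\in R(v)}\big(\sum_{j=1}^{N(v\to u)}(-1)^{|(v\to u)_j|-1}\big)c_{u,\sigma}$. *)

theory Defs
  imports Main
begin

text \<open>The graph construction is modelled with all vertices living in one type 'a:
  V l is the vertex set of G_l (after identifications), b l is its black vertex v_l^0.
  Identification of a vertex of V_l with a vertex of the earlier graph is modelled by
  the two sets sharing that element.\<close>

definition cVV :: "nat \<Rightarrow> (nat \<Rightarrow> 'a set) \<Rightarrow> 'a set" where
  "cVV l V = (\<Union>k\<in>{1..l}. V k)"

definition cWhite :: "nat \<Rightarrow> (nat \<Rightarrow> 'a set) \<Rightarrow> (nat \<Rightarrow> 'a) \<Rightarrow> 'a set" where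
  "cWhite l V b = cVV l V - b ` {1..l}"

definition zsize :: "nat \<Rightarrow> (nat \<Rightarrow> 'a set) \<Rightarrow> nat" where
  "zsize l V = card (V l \<inter> cVV (l - 1) V)"

definition valid_construction :: "nat \<Rightarrow> (nat \<Rightarrow> 'a set) \<Rightarrow> (nat \<Rightarrow> 'a) \<Rightarrow> bool" where
  "valid_construction L V b \<longleftrightarrow> 1 \<le> L \<and>
     (\<forall>l\<in>{1..L}. finite (V l) \<and> 2 \<le> card (V l) \<and> b l \<in> V l) \<and>
     (\<forall>l\<in>{2..L}. b l \<notin> cVV (l - 1) V \<and> 0 < zsize l V)"

definition dedge :: "nat \<Rightarrow> (nat \<Rightarrow> 'a set) \<Rightarrow> (nat \<Rightarrow> 'a) \<Rightarrow> 'a \<Rightarrow> 'a \<Rightarrow> bool" where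
  "dedge L V b x y \<longleftrightarrow> (\<exists>l\<in>{1..L}. y = b l \<and> x \<in> V l \<and> x \<noteq> b l)"

definition dpaths :: "nat \<Rightarrow> (nat \<Rightarrow> 'a set) \<Rightarrow> (nat \<Rightarrow> 'a) \<Rightarrow> 'a \<Rightarrow> 'a \<Rightarrow> 'a list set" where
  "dpaths L V b v u = {xs. xs \<noteq> [] \<and> hd xs = v \<and> last xs = u \<and>
     (\<forall>i. Suc i < length xs \<longrightarrow> dedge L V b (xs ! i) (xs ! Suc i))}"

definition reach :: "nat \<Rightarrow> (nat \<Rightarrow> 'a set) \<Rightarrow> (nat \<Rightarrow> 'a) \<Rightarrow> 'a \<Rightarrow> 'a set" where
  "reach L V b v = {u. dpaths L V b v u \<noteq> {}}"

definition npaths :: "nat \<Rightarrow> (nat \<Rightarrow> 'a set) \<Rightarrow> (nat \<Rightarrow> 'a) \<Rightarrow> 'a \<Rightarrow> 'a \<Rightarrow> nat" where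
  "npaths L V b v u = card (dpaths L V b v u)"

definition pcoef :: "nat \<Rightarrow> (nat \<Rightarrow> 'a set) \<Rightarrow> (nat \<Rightarrow> 'a) \<Rightarrow> 'a \<Rightarrow> 'a \<Rightarrow> int" where
  "pcoef L V b v u = (\<Sum>xs\<in>dpaths L V b v u. (-1) ^ (length xs - 1))"

text \<open>Coefficient of c_{u,sigma} in a_{v,sigma} = sum_{w in R(v)} pcoef v w c_{w,sigma}.
  By the CAR, the anticommutator {c^dagger_{u,sigma}, a_{v,sigma}} equals this scalar
  times the identity, so it is nonzero iff this coefficient is nonzero.\<close>
definition acomm :: "nat \<Rightarrow> (nat \<Rightarrow> 'a set) \<Rightarrow> (nat \<Rightarrow> 'a) \<Rightarrow> 'a \<Rightarrow> 'a \<Rightarrow> int" where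
  "acomm L V b u v = (if u \<in> reach L V b v then pcoef L V b v u else 0)"

definition condA1 :: "nat \<Rightarrow> (nat \<Rightarrow> 'a set) \<Rightarrow> (nat \<Rightarrow> 'a) \<Rightarrow> bool" where
  "condA1 L V b \<longleftrightarrow> (\<forall>l\<in>{2..L}. zsize l V \<noteq> card (V l) - 1 \<longrightarrow>
     (\<exists>v\<in>cWhite (l - 1) V b. odd (npaths L V b v (b l))))"

definition directly_connected :: "nat \<Rightarrow> (nat \<Rightarrow> 'a set) \<Rightarrow> (nat \<Rightarrow> 'a) \<Rightarrow> 'a \<Rightarrow> 'a \<Rightarrow> bool" where
  "directly_connected L V b v w \<longleftrightarrow>
     (\<exists>u\<in>cVV L V. acomm L V b u v \<noteq> 0 \<and> acomm L V b u w \<noteq> 0)"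

end

theory Submission
  imports Defs
begin

lemma cVV_mono: "k \<le> l \<Longrightarrow> cVV k V \<subseteq> cVV l V"
  unfolding cVV_def by (rule UN_mono) auto

lemma V_sub_cVV: "1 \<le> k \<Longrightarrow> k \<le> l \<Longrightarrow> V k \<subseteq> cVV l V"
  unfolding cVV_def by (intro UN_upper) auto

lemma b_inj:
  assumes vc: "valid_construction L V b" and k: "k \<in> {1..L}" and l: "l \<in> {1..L}"
    and eq: "b k = b l"
  shows "k = l"
proof (rule ccontr)
  assume ne: "k \<noteq> l"
  have bV: "\<And>j. j \<in> {1..L} \<Longrightarrow> b j \<in> V j" using vc unfolding valid_construction_def by auto
  have nc: "\<And>j. j \<in> {2..L} \<Longrightarrow> b j \<notin> cVV (j - 1) V" using vc unfolding valid_construction_def by auto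
  show False
  proof (cases "k < l")
    case True
    then have "k \<le> l - 1" by simp
    then have "b k \<in> cVV (l - 1) V" using V_sub_cVV[of k "l - 1" V] bV[OF k] k by auto
    moreover have "b l \<notin> cVV (l - 1) V" using nc l True k by auto
    ultimately show False using eq by simp
  next
    case False
    then have "l < k" using ne by simp
    then have "l \<le> k - 1" by simp
    then have "b l \<in> cVV (k - 1) V" using V_sub_cVV[of l "k - 1" V] bV[OF l] l by auto
    moreover have "b k \<notin> cVV (k - 1) V" using nc k \<open>l < k\<close> l by auto
    ultimately show False using eq by simp
  qed
qed

lemma b_edge:
  assumes vc: "valid_construction L V b" and k: "k \<in> {1..L}"
    and e: "dedge L V b (b k) y"
  shows "\<exists>k'\<in>{1..L}. y = b k' \<and> k < k'"
proof -
  obtain k' where k': "k' \<in> {1..L}" "y = b k'" "b k \<in> V k'" "b k \<noteq> b k'"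
    using e unfolding dedge_def by auto
  have nc: "\<And>j. j \<in> {2..L} \<Longrightarrow> b j \<notin> cVV (j - 1) V" using vc unfolding valid_construction_def by auto
  have "k < k'"
  proof (rule ccontr)
    assume "\<not> k < k'"
    then have "k' < k" using k'(4) by (cases "k = k'") auto
    then have "k' \<le> k - 1" by simp
    then have "b k \<in> cVV (k - 1) V" using V_sub_cVV[of k' "k - 1" V] k'(3) k'(1) by auto
    moreover have "b k \<notin> cVV (k - 1) V" using nc k \<open>k' < k\<close> k'(1) by auto
    ultimately show False by simp
  qed
  then show ?thesis using k' by auto
qed

lemma path_b:
  assumes vc: "valid_construction L V b"
    and ch: "\<forall>i. Suc i < length xs \<longrightarrow> dedge L V b (xs ! i) (xs ! Suc i)"
    and m: "m \<in> {1..L}" and xm: "xs ! i0 = b m"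
  shows "i0 \<le> i \<Longrightarrow> i < length xs \<Longrightarrow> \<exists>k\<in>{1..L}. xs ! i = b k \<and> m + (i - i0) \<le> k"
proof (induction i rule: dec_induct)
  case base
  then show ?case using m xm by auto
next
  case (step n)
  then obtain k where k: "k \<in> {1..L}" "xs ! n = b k" "m + (n - i0) \<le> k" by auto
  have "dedge L V b (b k) (xs ! Suc n)" using ch step k by auto
  then have "\<exists>k'\<in>{1..L}. xs ! Suc n = b k' \<and> k < k'" by (rule b_edge[OF vc k(1)])
  then obtain k' where "k' \<in> {1..L}" "xs ! Suc n = b k'" "k < k'" by blast
  then show ?case using k step by (intro bexI[of _ k']) auto
qed

lemma new_paths:
  assumes vc: "valid_construction L V b" and l: "l \<in> {1..L}"
    and x: "x \<in> V l" "x \<notin> cVV (l - 1) V" "x \<noteq> b l"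
  shows "dpaths L V b x (b l) = {[x, b l]}"
proof
  show "{[x, b l]} \<subseteq> dpaths L V b x (b l)"
    using l x unfolding dpaths_def dedge_def by (auto simp: nth_Cons split: nat.splits)
next
  show "dpaths L V b x (b l) \<subseteq> {[x, b l]}"
  proof
    fix xs assume "xs \<in> dpaths L V b x (b l)"
    then have xs: "xs \<noteq> []" "hd xs = x" "last xs = b l"
      "\<forall>i. Suc i < length xs \<longrightarrow> dedge L V b (xs ! i) (xs ! Suc i)"
      unfolding dpaths_def by auto
    have len2: "2 \<le> length xs"
    proof (rule ccontr)
      assume "\<not> 2 \<le> length xs"
      moreover have "length xs \<noteq> 0" using xs(1) by simp
      ultimately have "length xs = 1" by linarith
      then have "hd xs = last xs" using xs(1) by (simp add: hd_conv_nth last_conv_nth)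
      then show False using xs x by simp
    qed
    have x0: "xs ! 0 = x" using xs by (simp add: hd_conv_nth)
    have "dedge L V b (xs ! 0) (xs ! 1)" using xs(4) len2 by auto
    then obtain m where m: "m \<in> {1..L}" "xs ! 1 = b m" "x \<in> V m" "x \<noteq> b m"
      unfolding dedge_def using x0 by auto
    have "l \<le> m"
    proof (rule ccontr)
      assume "\<not> l \<le> m"
      then have "m \<le> l - 1" by simp
      then have "x \<in> cVV (l - 1) V" using V_sub_cVV[of m "l - 1" V] m by auto
      then show False using x by simp
    qed
    obtain k where k: "k \<in> {1..L}" "xs ! (length xs - 1) = b k" "m + (length xs - 1 - 1) \<le> k"
    proof -
      have "1 \<le> length xs - 1" "length xs - 1 < length xs" using len2 by auto
      then have "\<exists>k\<in>{1..L}. xs ! (length xs - 1) = b k \<and> m + (length xs - 1 - 1) \<le> k"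
        by (rule path_b[OF vc xs(4) m(1) m(2)])
      then show ?thesis using that by blast
    qed
    have "xs ! (length xs - 1) = b l" using xs by (simp add: last_conv_nth)
    then have "k = l" using b_inj[OF vc k(1) l] k by simp
    then have "length xs = 2" using k \<open>l \<le> m\<close> len2 by simp
    then have "xs = [xs ! 0, xs ! 1]"
      by (cases xs; cases "tl xs"; auto)
    moreover have "m = l" using k \<open>k = l\<close> \<open>l \<le> m\<close> by simp
    ultimately show "xs \<in> {[x, b l]}" using x0 m l by simp
  qed
qed

lemma sum_pm1_parity:
  assumes "finite S"
  shows "even (\<Sum>xs\<in>S. ((-1::int) ^ f xs)) \<longleftrightarrow> even (card S)"
  using assms by (induction S rule: finite_induct) auto

lemma acomm_odd:
  assumes "odd (npaths L V b v u)"
  shows "acomm L V b u v \<noteq> 0"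
proof -
  have c: "card (dpaths L V b v u) \<noteq> 0"
  proof
    assume "card (dpaths L V b v u) = 0"
    then have "npaths L V b v u = 0" unfolding npaths_def by simp
    then show False using assms by simp
  qed
  have fin: "finite (dpaths L V b v u)"
  proof (rule ccontr)
    assume "infinite (dpaths L V b v u)"
    then have "card (dpaths L V b v u) = 0" by (rule card.infinite)
    then show False using c by simp
  qed
  have ne: "dpaths L V b v u \<noteq> {}"
  proof
    assume "dpaths L V b v u = {}"
    then have "card (dpaths L V b v u) = 0" by simp
    then show False using c by simp
  qed
  have eq: "even (pcoef L V b v u) \<longleftrightarrow> even (card (dpaths L V b v u))"
    unfolding pcoef_def by (rule sum_pm1_parity[OF fin])
  have "odd (card (dpaths L V b v u))" using assms unfolding npaths_def .
  then have "odd (pcoef L V b v u)" using eq by simp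
  then have "pcoef L V b v u \<noteq> 0" by (intro notI) simp
  then show ?thesis using ne unfolding acomm_def reach_def by simp
qed

lemma acomm_new:
  assumes vc: "valid_construction L V b" and l: "l \<in> {1..L}"
    and x: "x \<in> V l" "x \<notin> cVV (l - 1) V" "x \<noteq> b l"
  shows "acomm L V b (b l) x \<noteq> 0"
proof -
  have "npaths L V b x (b l) = 1" using new_paths[OF assms] unfolding npaths_def by simp
  then have "odd (npaths L V b x (b l))" by simp
  then show ?thesis by (rule acomm_odd)
qed

lemma cWhite_sub:
  assumes vc: "valid_construction L V b" and "l \<le> K" and KL: "K \<le> L" and l1: "1 \<le> l"
  shows "cWhite l V b \<subseteq> cWhite K V b"
proof
  fix x assume x: "x \<in> cWhite l V b"
  have nc: "\<And>j. j \<in> {2..L} \<Longrightarrow> b j \<notin> cVV (j - 1) V" using vc unfolding valid_construction_def by auto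
  have "x \<in> cVV K V" using x cVV_mono[OF assms(2), of V] unfolding cWhite_def by auto
  moreover have "x \<notin> b ` {1..K}"
  proof
    assume "x \<in> b ` {1..K}"
    then obtain j where j: "j \<in> {1..K}" "x = b j" by auto
    show False
    proof (cases "j \<le> l")
      case True then show ?thesis using x j unfolding cWhite_def by auto
    next
      case False
      then have "l \<le> j - 1" by simp
      then have "x \<in> cVV (j - 1) V" using x cVV_mono[of l "j - 1" V] unfolding cWhite_def by auto
      then show ?thesis using nc[of j] j False l1 KL by auto
    qed
  qed
  ultimately show "x \<in> cWhite K V b" unfolding cWhite_def by auto
qed

lemma dc_sym: "directly_connected L V b x y \<Longrightarrow> directly_connected L V b y x"
  unfolding directly_connected_def by auto

lemma rt_sym:
  assumes "\<And>x y. (x, y) \<in> R \<Longrightarrow> (y, x) \<in> R" and "(x, y) \<in> R\<^sup>*"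
  shows "(y, x) \<in> R\<^sup>*"
  using assms(2) by (induction rule: rtrancl_induct) (auto intro: converse_rtrancl_into_rtrancl assms(1))

lemma rt_list:
  assumes "(x, y) \<in> {(x, y). x \<in> W \<and> y \<in> W \<and> P x y}\<^sup>*" and "x \<in> W"
  shows "\<exists>ps. ps \<noteq> [] \<and> hd ps = x \<and> last ps = y \<and> set ps \<subseteq> W \<and>
           (\<forall>j. Suc j < length ps \<longrightarrow> P (ps ! j) (ps ! Suc j))"
  using assms(1)
proof (induction rule: rtrancl_induct)
  case base
  then show ?case using assms(2) by (intro exI[of _ "[x]"]) auto
next
  case (step y z)
  then obtain ps where ps: "ps \<noteq> []" "hd ps = x" "last ps = y" "set ps \<subseteq> W"
    "\<forall>j. Suc j < length ps \<longrightarrow> P (ps ! j) (ps ! Suc j)" by auto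
  have "\<forall>j. Suc j < length (ps @ [z]) \<longrightarrow> P ((ps @ [z]) ! j) ((ps @ [z]) ! Suc j)"
  proof (intro allI impI)
    fix j assume j: "Suc j < length (ps @ [z])"
    show "P ((ps @ [z]) ! j) ((ps @ [z]) ! Suc j)"
    proof (cases "Suc j < length ps")
      case True then show ?thesis using ps(5) by (simp add: nth_append)
    next
      case False
      then have "j = length ps - 1" using j by simp
      then have "(ps @ [z]) ! j = y" "(ps @ [z]) ! Suc j = z"
        using ps(1,3) False j by (auto simp: nth_append last_conv_nth)
      then show ?thesis using step by simp
    qed
  qed
  then show ?case using ps step by (intro exI[of _ "ps @ [z]"]) auto
qed

lemma dc_new:
  assumes vc: "valid_construction L V b" and l: "l \<in> {1..L}"
    and x: "x \<in> V l" "x \<notin> cVV (l - 1) V" "x \<noteq> b l"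
    and y: "acomm L V b (b l) y \<noteq> 0"
  shows "directly_connected L V b x y"
proof -
  have "b l \<in> V l" using vc l unfolding valid_construction_def by auto
  then have "b l \<in> cVV L V" using V_sub_cVV[of l L V] l by auto
  then show ?thesis unfolding directly_connected_def using acomm_new[OF vc l x] y by blast
qed

lemma main_ind:
  assumes vc: "valid_construction L V b" and a1: "condA1 L V b"
  defines "R \<equiv> {(x, y). x \<in> cWhite L V b \<and> y \<in> cWhite L V b \<and> directly_connected L V b x y}"
  shows "1 \<le> l \<Longrightarrow> l \<le> L \<Longrightarrow> \<forall>x\<in>cWhite l V b. \<forall>y\<in>cWhite l V b. (x, y) \<in> R\<^sup>*"
proof (induction l)
  case 0
  then show ?case by simp
next
  case (Suc l)
  define m where "m = Suc l"
  have m: "m \<in> {1..L}" using Suc.prems m_def by auto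
  have Wsub: "cWhite m V b \<subseteq> cWhite L V b" using cWhite_sub[OF vc, of m L] m by auto
  have Rsym: "\<And>x y. (x, y) \<in> R \<Longrightarrow> (y, x) \<in> R" unfolding R_def by (auto intro: dc_sym)
  have newdesc: "x \<in> V m \<and> x \<notin> cVV (m - 1) V \<and> x \<noteq> b m"
    if "x \<in> cWhite m V b" "l = 0 \<or> x \<notin> cWhite l V b" for x
  proof -
    have xm: "x \<in> cVV m V" "x \<notin> b ` {1..m}" using that unfolding cWhite_def by auto
    have bm: "x \<noteq> b m" using xm m by auto
    have "cVV m V = cVV l V \<union> V m" unfolding cVV_def m_def by (auto simp: atLeastAtMostSuc_conv)
    moreover have "x \<notin> cVV l V"
    proof
      assume "x \<in> cVV l V"
      moreover then have "l \<noteq> 0" unfolding cVV_def by auto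
      moreover have "x \<notin> b ` {1..l}" using xm m_def by auto
      ultimately show False using that unfolding cWhite_def by auto
    qed
    ultimately show ?thesis using xm bm m_def by auto
  qed
  have newpair: "(x, y) \<in> R\<^sup>*"
    if "x \<in> cWhite m V b" "l = 0 \<or> x \<notin> cWhite l V b"
       "y \<in> cWhite m V b" "l = 0 \<or> y \<notin> cWhite l V b" for x y
  proof -
    have nx: "x \<in> V m" "x \<notin> cVV (m - 1) V" "x \<noteq> b m" using newdesc that by auto
    have ny: "y \<in> V m" "y \<notin> cVV (m - 1) V" "y \<noteq> b m" using newdesc that by auto
    have "directly_connected L V b x y" using dc_new[OF vc m nx acomm_new[OF vc m ny]] .
    then have "(x, y) \<in> R" unfolding R_def using that Wsub by auto
    then show ?thesis by auto
  qed
  show ?case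
  proof (cases "l = 0")
    case True
    then show ?thesis using newpair unfolding m_def by blast
  next
    case False
    then have IH: "\<forall>x\<in>cWhite l V b. \<forall>y\<in>cWhite l V b. (x, y) \<in> R\<^sup>*" using Suc by auto
    have Wl: "cWhite l V b \<subseteq> cWhite m V b" using cWhite_sub[OF vc, of l m] False m_def m by auto
    have newold: "(x, y) \<in> R\<^sup>*"
      if x: "x \<in> cWhite m V b" "x \<notin> cWhite l V b" and y: "y \<in> cWhite l V b" for x y
    proof -
      have nx: "x \<in> V m" "x \<notin> cVV (m - 1) V" "x \<noteq> b m" using newdesc x by auto
      have fin: "finite (V m)" using vc m unfolding valid_construction_def by auto
      have c2: "2 \<le> card (V m)" using vc m unfolding valid_construction_def by auto
      have bm: "b m \<in> V m" using vc m unfolding valid_construction_def by auto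
      have "V m \<inter> cVV (m - 1) V \<subseteq> V m - {b m, x}"
        using nx vc m \<open>l \<noteq> 0\<close> unfolding valid_construction_def m_def by fastforce
      then have "card (V m \<inter> cVV (m - 1) V) \<le> card (V m - {b m, x})"
        using fin by (intro card_mono) auto
      also have "\<dots> = card (V m) - 2" using fin bm nx by (simp add: card_Diff_subset)
      finally have "zsize m V \<noteq> card (V m) - 1" unfolding zsize_def using c2 by simp
      moreover have "m \<in> {2..L}" using m False m_def by auto
      ultimately obtain v where v: "v \<in> cWhite l V b" "odd (npaths L V b v (b m))"
        using a1 unfolding condA1_def m_def by auto
      have "directly_connected L V b x v" using dc_new[OF vc m nx acomm_odd[OF v(2)]] .
      then have "(x, v) \<in> R" unfolding R_def using x v Wsub Wl by auto
      moreover have "(v, y) \<in> R\<^sup>*" using IH v y by auto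
      ultimately show ?thesis by (rule converse_rtrancl_into_rtrancl)
    qed
    show ?thesis
    proof (intro ballI)
      fix x y assume x: "x \<in> cWhite (Suc l) V b" and y: "y \<in> cWhite (Suc l) V b"
      show "(x, y) \<in> R\<^sup>*"
      proof (cases "x \<in> cWhite l V b")
        case xo: True
        show ?thesis
        proof (cases "y \<in> cWhite l V b")
          case True then show ?thesis using IH xo by auto
        next
          case False
          then have "(y, x) \<in> R\<^sup>*" using newold y xo m_def by auto
          then show ?thesis using rt_sym[OF Rsym] by blast
        qed
      next
        case xn: False
        show ?thesis
        proof (cases "y \<in> cWhite l V b")
          case True then show ?thesis using newold x xn m_def by auto
        next
          case False then show ?thesis using newpair x y xn m_def by auto
        qed
      qed
    qed
  qed
qed

theorem mainTheorem6:
  fixes L :: nat and V :: "nat \<Rightarrow> 'a set" and b :: "nat \<Rightarrow> 'a"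
  assumes "valid_construction L V b"
    and "condA1 L V b"
    and "v \<in> cWhite L V b" and "v' \<in> cWhite L V b"
  shows "\<exists>ps. ps \<noteq> [] \<and> hd ps = v \<and> last ps = v' \<and> set ps \<subseteq> cWhite L V b \<and>
           (\<forall>j. Suc j < length ps \<longrightarrow> directly_connected L V b (ps ! j) (ps ! Suc j))"
proof -
  have L1: "1 \<le> L" using assms(1) unfolding valid_construction_def by auto
  have "(v, v') \<in> {(x, y). x \<in> cWhite L V b \<and> y \<in> cWhite L V b \<and> directly_connected L V b x y}\<^sup>*"
    using main_ind[OF assms(1,2) L1 order.refl] assms(3,4) by blast
  then show ?thesis by (rule rt_list) (rule assms(3))
qed

end
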